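(* In the setting of the context, suppose $\delta_1\ge\delta_2\ge\cdots\ge\delta_s$. Then every vector of $C^\perp\setminus C$ has weight at least $\min_{1\le j\le s}\delta_jn_2(k_j+1)$. Consequently the relative minimum distance $\delta$ of the generalized concatenated quantum code $Q$ (of length $n_1n_2$ and rate $R=r-\frac{2r}{s}\sum_{j=1}^s r'_j$, where $r=sm/n_2$ and $r'_j=k_j/n_1$) satisfies \[ \delta\ge\min_{1\le j\le s}\delta_j r'_j . \]
   Context: $\mathbb{F}_4=\{0,1,\omega,\omega^2\}$, $\omega^2=\omega+1$, $\bar x=x^2$; trace inner product $\langle u,v\rangle=\sum_i(u_i\bar v_i+\bar u_iv_i)\in\mathbb{F}_2$; additive codes are $\mathbb{F}_2$-subspaces, $C^\perp$ is the trace dual, self-orthogonal means $C\subseteq C^\perp$; weight = number of nonzero coordinates; a stabilizer code $[[N,K,D]]$ is given by a self-orthogonal $C$ with $|C|=2^{N-K}$ such that all vectors of $C^\perp\setminus C$ have weight $\ge D$. Outer codes: let $s\ge2$, $m\ge2$, $n_1=2^m-1$, and integers $1\le k_i\le 2^{m-1}-1$ ($1\le i\le s$). For each $i$, let $B_i\subseteq B_i^\perp\subseteq\mathbb{F}_4^{mn_1}$ be the quantum Reed–Solomon pair $B_i=\omega\mathcal B(C^{(i)}_{\rm RS})+\bar\omega\mathcal B(C^{(i)}_{\rm RS})$, $B_i^\perp=\omega\mathcal B(C^{(i)\perp}_{\rm RS})+\bar\omega\mathcal B(C^{(i)\perp}_{\rm RS})$, where $C^{(i)}_{\rm RS}$ is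 the cyclic Reed–Solomon code of length $n_1$ over $\mathbb{F}_{2^m}$ with generator polynomial $\prod_{l=0}^{n_1-k_i-1}(x-\alpha^l)$ ($\alpha$ primitive), $C^{(i)\perp}_{\rm RS}$ its dual (minimum distance $k_i+1$), and $\mathcal B(\cdot)$ is binary expansion w.r.t. a fixed self-dual basis of $\mathbb{F}_{2^m}/\mathbb{F}_2$. Vectors of $\mathbb{F}_4^{mn_1}$ are written as $(b_1,\dots,b_{n_1})$ with $b_l\in\mathbb{F}_4^m$ (one block per Reed–Solomon position). Let $B=B_1\oplus\cdots\oplus B_s$ and $B^\perp=B_1^\perp\oplus\cdots\oplus B_s^\perp$; an element $b=(\mathbf b_1,\dots,\mathbf b_s)$ with $\mathbf b_i=(b_{i,1},\dots,b_{i,n_1})$ is viewed as an $s\times n_1$ array over $\mathbb{F}_4^m$ with columns $c_l=(b_{1,l},\dots,b_{s,l})\in\mathbb{F}_4^{sm}$. Inner codes: $n_2\ge sm$, and self-orthogonal additive codes $C_s\subseteq C_{s-1}\subseteq\cdots\subseteq C_1\subseteq\mathbb{F}_4^{n_2}$ with $|C_j|=2^{n_2-jm}$, such that every vector of $C_j^\perp\setminus C_j$ has weight at least $\delta_jn_2$ (so $C_j$ defines an $[[n_2,jm,\delta_jn_2]]$ code $Q_2^{(j)}$). Let $g_i,h_i\in C_s^\perp$ ($1\le i\le sm$) satisfy $\langle g_i,h_l\rangle=\delta_{il}$, $\langle g_i,g_l\rangle=\langle h_i,h_l\rangle=0$, and for every $j$, $C_j^\perp=C_j+\mathrm{span}_{\mathbb{F}_2}\{g_i,h_i:1\le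 i\le jm\}$. Let $e_1,\dots,e_{sm}$ be the standard basis of $\mathbb{F}_4^{sm}$ and define the $\mathbb{F}_2$-linear map $\rho:\mathbb{F}_4^{sm}\to C_s^\perp/C_s$ by $\rho(\omega e_i)=g_i+C_s$, $\rho(\bar\omega e_i)=h_i+C_s$. The code: $C^\perp=\{(w_1,\dots,w_{n_1})\in(\mathbb{F}_4^{n_2})^{n_1}:\exists b\in B^\perp,\ w_l\in\rho(c_l)\ \forall l\}$ and $C$ is defined the same way with $b\in B$; $C\subseteq C^\perp$, $C^\perp$ is the trace dual of $C$, and $Q$ denotes the stabilizer code defined by $C$. *)

theory Defs
  imports "HOL-Analysis.Analysis" "HOL-Computational_Algebra.Polynomial"
begin

text \<open>F4 a b represents a + b*w, where w^2 = w + 1 (characteristic 2).\<close>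
datatype f4 = F4 bool bool

instantiation f4 :: comm_ring_1
begin
definition zero_f4 :: f4 where "zero_f4 = F4 False False"
definition one_f4 :: f4 where "one_f4 = F4 True False"
fun plus_f4 :: "f4 \<Rightarrow> f4 \<Rightarrow> f4" where
  "plus_f4 (F4 a b) (F4 c d) = F4 (a \<noteq> c) (b \<noteq> d)"
definition uminus_f4 :: "f4 \<Rightarrow> f4" where "uminus_f4 x = x"
definition minus_f4 :: "f4 \<Rightarrow> f4 \<Rightarrow> f4" where "minus_f4 x y = x + y"
fun times_f4 :: "f4 \<Rightarrow> f4 \<Rightarrow> f4" where
  "times_f4 (F4 a b) (F4 c d) =
     F4 ((a \<and> c) \<noteq> (b \<and> d)) (((a \<and> d) \<noteq> (b \<and> c)) \<noteq> (b \<and> d))"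
instance
proof
  fix x y z :: f4
  show "x + y + z = x + (y + z)" by (cases x; cases y; cases z) auto
  show "x + y = y + x" by (cases x; cases y) auto
  show "0 + x = x" by (cases x) (auto simp: zero_f4_def)
  show "- x + x = 0" by (cases x) (auto simp: zero_f4_def uminus_f4_def)
  show "x - y = x + - y" by (simp add: minus_f4_def uminus_f4_def)
  show "x * y * z = x * (y * z)" by (cases x; cases y; cases z) auto
  show "x * y = y * x" by (cases x; cases y) auto
  show "1 * x = x" by (cases x) (auto simp: one_f4_def)
  show "(x + y) * z = x * z + y * z" by (cases x; cases y; cases z) auto
  show "(0::f4) \<noteq> 1" by (simp add: zero_f4_def one_f4_def)
qed
end

definition f4_omega :: f4 where "f4_omega = F4 False True"
definition f4_omegabar :: f4 where "f4_omegabar = F4 True True"  \<comment> \<open>w^2 = w + 1\<close>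

text \<open>Conjugation x \<mapsto> x^2: (a + b w)^2 = (a+b) + b w.\<close>
fun f4_conj :: "f4 \<Rightarrow> f4" where "f4_conj (F4 a b) = F4 (a \<noteq> b) b"

text \<open>Absolute trace F4 \<rightarrow> F2, x + x^2; Tr(a + b w) = b.\<close>
fun f4_tr :: "f4 \<Rightarrow> bool" where "f4_tr (F4 a b) = b"

text \<open>Coefficients of x = a w + b wbar (every x has a unique such representation).\<close>
fun coef_omega :: "f4 \<Rightarrow> bool" where "coef_omega (F4 a b) = (a \<noteq> b)"
fun coef_omegabar :: "f4 \<Rightarrow> bool" where "coef_omegabar (F4 a b) = a"

definition f2_to_f4 :: "bool \<Rightarrow> f4" where "f2_to_f4 c = (if c then 1 else 0)"

text \<open>Vectors of F4^N are functions nat \<Rightarrow> f4 vanishing outside {0..<N}.\<close>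
definition vecs :: "nat \<Rightarrow> (nat \<Rightarrow> f4) set" where
  "vecs N = {v. \<forall>q\<ge>N. v q = 0}"

definition wt :: "nat \<Rightarrow> (nat \<Rightarrow> f4) \<Rightarrow> nat" where
  "wt N v = card {q \<in> {0..<N}. v q \<noteq> 0}"

text \<open>Trace inner product <u,v> = sum_q (u_q conj(v_q) + conj(u_q) v_q) in F2 (True = 1).\<close>
definition tip :: "nat \<Rightarrow> (nat \<Rightarrow> f4) \<Rightarrow> (nat \<Rightarrow> f4) \<Rightarrow> bool" where
  "tip N u v = odd (card {q \<in> {0..<N}. f4_tr (u q * f4_conj (v q))})"

definition tdual :: "nat \<Rightarrow> (nat \<Rightarrow> f4) set \<Rightarrow> (nat \<Rightarrow> f4) set" where
  "tdual N C = {v \<in> vecs N. \<forall>u \<in> C. \<not> tip N u v}"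

text \<open>Additive code = F2-subspace of F4^N.\<close>
definition additive :: "nat \<Rightarrow> (nat \<Rightarrow> f4) set \<Rightarrow> bool" where
  "additive N C \<longleftrightarrow> C \<subseteq> vecs N \<and> (\<lambda>q. 0) \<in> C \<and> (\<forall>u\<in>C. \<forall>v\<in>C. (\<lambda>q. u q + v q) \<in> C)"

definition self_orth :: "nat \<Rightarrow> (nat \<Rightarrow> f4) set \<Rightarrow> bool" where
  "self_orth N C \<longleftrightarrow> C \<subseteq> tdual N C"

text \<open>C + span_F2 {g_p, h_p : p < P}.\<close>
definition plus_span :: "(nat \<Rightarrow> f4) set \<Rightarrow> nat \<Rightarrow> (nat \<Rightarrow> nat \<Rightarrow> f4) \<Rightarrow> (nat \<Rightarrow> nat \<Rightarrow> f4)
    \<Rightarrow> (nat \<Rightarrow> f4) set" where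
  "plus_span C P g h = {(\<lambda>q. u q + (\<Sum>p<P. (if a p then g p q else 0) + (if c p then h p q else 0)))
       | u a c. u \<in> C}"

definition ftrace :: "nat \<Rightarrow> 'f::field \<Rightarrow> 'f" where
  "ftrace m x = (\<Sum>t<m. x ^ (2 ^ t))"

definition self_dual_basis :: "nat \<Rightarrow> (nat \<Rightarrow> 'f::field) \<Rightarrow> bool" where
  "self_dual_basis m \<beta> \<longleftrightarrow>
     (\<forall>x. \<exists>!cs. length cs = m \<and> x = (\<Sum>t<m. if cs ! t then \<beta> t else 0)) \<and>
     (\<forall>i<m. \<forall>j<m. ftrace m (\<beta> i * \<beta> j) = (if i = j then 1 else 0))"

definition bcoord :: "nat \<Rightarrow> (nat \<Rightarrow> 'f::field) \<Rightarrow> 'f \<Rightarrow> nat \<Rightarrow> bool" where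
  "bcoord m \<beta> x t = (if t < m then
      (THE cs. length cs = m \<and> x = (\<Sum>t<m. if cs ! t then \<beta> t else 0)) ! t else False)"

definition primitive_elem :: "nat \<Rightarrow> 'f::field \<Rightarrow> bool" where
  "primitive_elem n1 \<alpha> \<longleftrightarrow> \<alpha> ^ n1 = 1 \<and> (\<forall>t. 0 < t \<and> t < n1 \<longrightarrow> \<alpha> ^ t \<noteq> 1)"

definition rs_code :: "nat \<Rightarrow> nat \<Rightarrow> 'f::field \<Rightarrow> (nat \<Rightarrow> 'f) set" where
  "rs_code n1 k \<alpha> = {c. (\<forall>j\<ge>n1. c j = 0) \<and>
      (\<Prod>l<n1 - k. [:- (\<alpha> ^ l), 1:]) dvd (\<Sum>j<n1. monom (c j) j)}"

definition lin_dual :: "nat \<Rightarrow> (nat \<Rightarrow> 'f::field) set \<Rightarrow> (nat \<Rightarrow> 'f) set" where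
  "lin_dual n1 C = {d. (\<forall>j\<ge>n1. d j = 0) \<and> (\<forall>c\<in>C. (\<Sum>j<n1. c j * d j) = 0)}"

text \<open>Quantum RS set w B(S) + wbar B(S) in F4^{m n1}; an element is indexed by
  (l, t): RS position l < n1 and binary coordinate t < m.\<close>
definition qrs :: "nat \<Rightarrow> (nat \<Rightarrow> 'f::field) \<Rightarrow> (nat \<Rightarrow> 'f) set \<Rightarrow> (nat \<Rightarrow> nat \<Rightarrow> f4) set" where
  "qrs m \<beta> S = {(\<lambda>l t. f4_omega * f2_to_f4 (bcoord m \<beta> (u l) t)
                     + f4_omegabar * f2_to_f4 (bcoord m \<beta> (v l) t)) | u v. u \<in> S \<and> v \<in> S}"

text \<open>Column c_l in F4^{sm} of the array b (rows i = 1..s): coordinate (i-1)*m + t is b_{i,l,t}.\<close>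
definition col :: "nat \<Rightarrow> (nat \<Rightarrow> nat \<Rightarrow> nat \<Rightarrow> f4) \<Rightarrow> nat \<Rightarrow> nat \<Rightarrow> f4" where
  "col m b l p = b (p div m + 1) l (p mod m)"

text \<open>A representative of rho(c): rho(w e_p) = g_p, rho(wbar e_p) = h_p, F2-linear.\<close>
definition rho_rep :: "(nat \<Rightarrow> nat \<Rightarrow> f4) \<Rightarrow> (nat \<Rightarrow> nat \<Rightarrow> f4) \<Rightarrow> nat \<Rightarrow> (nat \<Rightarrow> f4) \<Rightarrow> nat \<Rightarrow> f4" where
  "rho_rep g h P c q = (\<Sum>p<P. (if coef_omega (c p) then g p q else 0)
                          + (if coef_omegabar (c p) then h p q else 0))"

text \<open>The concatenated code: words (w_1..w_{n1}) in (F4^{n2})^{n1} (w indexed by (l,q)),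
  with w_l \<in> rho(c_l) = rho_rep(c_l) + C_s for some b with rows b_i \<in> qrs(RS i).\<close>
definition gc_code :: "nat \<Rightarrow> (nat \<Rightarrow> 'f::field) \<Rightarrow> nat \<Rightarrow> nat \<Rightarrow> nat
    \<Rightarrow> (nat \<Rightarrow> (nat \<Rightarrow> 'f) set) \<Rightarrow> (nat \<Rightarrow> f4) set
    \<Rightarrow> (nat \<Rightarrow> nat \<Rightarrow> f4) \<Rightarrow> (nat \<Rightarrow> nat \<Rightarrow> f4) \<Rightarrow> (nat \<Rightarrow> nat \<Rightarrow> f4) set" where
  "gc_code m \<beta> s n1 n2 RS Cs g h =
     {w. (\<forall>l q. n1 \<le> l \<or> n2 \<le> q \<longrightarrow> w l q = 0) \<and>
         (\<exists>b. (\<forall>i\<in>{1..s}. b i \<in> qrs m \<beta> (RS i)) \<and>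
              (\<forall>l<n1. \<exists>u\<in>Cs. \<forall>q. w l q = rho_rep g h (s * m) (col m b l) q + u q))}"

definition wt2 :: "nat \<Rightarrow> nat \<Rightarrow> (nat \<Rightarrow> nat \<Rightarrow> f4) \<Rightarrow> nat" where
  "wt2 n1 n2 w = card {(l, q). l < n1 \<and> q < n2 \<and> w l q \<noteq> 0}"

end

theory Submission
  imports Defs
begin

lemma f4_tr_add_mult: "f4_tr ((x + y) * z) = (f4_tr (x * z) \<noteq> f4_tr (y * z))"
  by (cases x; cases y; cases z) auto

lemma f4_tr_sym: "f4_tr (x * f4_conj y) = f4_tr (y * f4_conj x)"
  by (cases x; cases y) auto

lemma f4_tr_zero: "f4_tr (0 * z) = False"
  by (cases z) (auto simp: zero_f4_def)

lemma f4_nonzero_coef: "(x::f4) \<noteq> 0 \<Longrightarrow> coef_omega x \<or> coef_omegabar x"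
  by (cases x) (auto simp: zero_f4_def)

lemma f4_coef_zero: "coef_omega 0 = False" "coef_omegabar 0 = False"
  by (auto simp: zero_f4_def)

lemma f4_F_zero: "(f4_omega * f2_to_f4 a + f4_omegabar * f2_to_f4 b = 0) \<longleftrightarrow> \<not> a \<and> \<not> b"
  by (cases a; cases b) (auto simp: f4_omega_def f4_omegabar_def f2_to_f4_def zero_f4_def one_f4_def)

lemma card_filter_insert:
  "finite X \<Longrightarrow> x \<notin> X \<Longrightarrow> card {q \<in> insert x X. P q} = card {q \<in> X. P q} + (if P x then 1 else 0)"
proof -
  assume f: "finite X" and x: "x \<notin> X"
  show ?thesis
  proof (cases "P x")
    case True
    then have "{q \<in> insert x X. P q} = insert x {q \<in> X. P q}" by auto
    then show ?thesis using f x True by simp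
  next
    case False
    then have "{q \<in> insert x X. P q} = {q \<in> X. P q}" by auto
    then show ?thesis using False by simp
  qed
qed

lemma parity_xor:
  "finite X \<Longrightarrow> odd (card {q \<in> X. P q \<noteq> Q q}) = (odd (card {q \<in> X. P q}) \<noteq> odd (card {q \<in> X. Q q}))"
proof (induction X rule: finite_induct)
  case empty
  then show ?case by simp
next
  case (insert x F)
  have a: "\<And>R. card {q \<in> insert x F. R q} = card {q\<in>F. R q} + (if R x then 1 else 0)"
    using insert by (intro card_filter_insert) auto
  show ?case by (simp only: a) (use insert.IH in auto)
qed

lemma tip_add1: "tip N (\<lambda>q. x q + y q) v = (tip N x v \<noteq> tip N y v)"
  unfolding tip_def f4_tr_add_mult by (rule parity_xor) simp

lemma tip_sym: "tip N u v = tip N v u"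
  unfolding tip_def by (simp add: f4_tr_sym)

lemma f4_tr_0: "f4_tr 0 = False" by (simp add: zero_f4_def)

lemma tip_zero1: "tip N (\<lambda>q. 0) v = False"
  unfolding tip_def by (simp add: f4_tr_0)

lemma tip_if1: "tip N (\<lambda>q. if a then x q else 0) v = (a \<and> tip N x v)"
  by (cases a) (simp_all add: tip_zero1)

lemma tip_sum1:
  fixes Pn :: nat
  shows "tip N (\<lambda>q. \<Sum>p<Pn. G p q) v = odd (card {p \<in> {..<Pn}. tip N (G p) v})"
proof (induction Pn)
  case 0
  then show ?case using tip_zero1 by simp
next
  case (Suc Pn)
  have h1: "tip N (\<lambda>q. \<Sum>p<Suc Pn. G p q) v = (tip N (\<lambda>q. \<Sum>p<Pn. G p q) v \<noteq> tip N (G Pn) v)"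
    using tip_add1[of N "\<lambda>q. \<Sum>p<Pn. G p q" "G Pn" v] by simp
  have h2: "{p \<in> {..<Suc Pn}. tip N (G p) v} = {p \<in> insert Pn {..<Pn}. tip N (G p) v}"
    by (simp only: lessThan_Suc)
  have c: "card {p \<in> insert Pn {..<Pn}. tip N (G p) v} = card {p \<in> {..<Pn}. tip N (G p) v} + (if tip N (G Pn) v then 1 else 0)"
    by (rule card_filter_insert) auto
  show ?case unfolding h1 h2 c Suc.IH by auto
qed

lemma sparse_zero:
  fixes \<beta> a :: "nat \<Rightarrow> 'f::field"
  assumes "finite S"
  shows "\<forall>a n. card S \<le> n \<and> inj_on \<beta> S \<and> (\<forall>j\<in>S. \<beta> j \<noteq> 0)
     \<and> (\<forall>t\<in>{1..n}. (\<Sum>j\<in>S. a j * \<beta> j ^ t) = 0) \<longrightarrow> (\<forall>j\<in>S. a j = 0)"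
  using assms
proof (induction S rule: finite_induct)
  case empty
  then show ?case by simp
next
  case (insert x F)
  show ?case
  proof (intro allI impI)
    fix a :: "nat \<Rightarrow> 'f" and n
    assume H: "card (insert x F) \<le> n \<and> inj_on \<beta> (insert x F) \<and> (\<forall>j\<in>insert x F. \<beta> j \<noteq> 0)
     \<and> (\<forall>t\<in>{1..n}. (\<Sum>j\<in>insert x F. a j * \<beta> j ^ t) = 0)"
    define a' where "a' j = a j * (\<beta> j - \<beta> x)" for j
    have "card (insert x F) = Suc (card F)" using insert by simp
    then have cF: "card F \<le> n - 1" using H by linarith
    have n1: "n \<ge> 1" using H insert by simp
    have sums: "\<And>t. t \<in> {1..n} \<Longrightarrow> a x * \<beta> x ^ t + (\<Sum>j\<in>F. a j * \<beta> j ^ t) = 0"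
      using H insert by simp
    have "\<forall>t\<in>{1..n-1}. (\<Sum>j\<in>F. a' j * \<beta> j ^ t) = 0"
    proof
      fix t assume t: "t \<in> {1..n-1}"
      have e1: "a x * \<beta> x ^ (Suc t) + (\<Sum>j\<in>F. a j * \<beta> j ^ (Suc t)) = 0" by (rule sums) (use t n1 in auto)
      have e2: "a x * \<beta> x ^ t + (\<Sum>j\<in>F. a j * \<beta> j ^ t) = 0" by (rule sums) (use t n1 in auto)
      have nn: "X = - Y" if "Y + X = 0" for X Y :: 'f using that by (simp add: eq_neg_iff_add_eq_0 add.commute)
      have f1: "(\<Sum>j\<in>F. a j * \<beta> j ^ Suc t) = - (a x * \<beta> x ^ (Suc t))" by (rule nn[OF e1])
      have f2: "(\<Sum>j\<in>F. a j * \<beta> j ^ t) = - (a x * \<beta> x ^ t)" by (rule nn[OF e2])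
      have "(\<Sum>j\<in>F. a' j * \<beta> j ^ t) = (\<Sum>j\<in>F. a j * \<beta> j ^ Suc t) - \<beta> x * (\<Sum>j\<in>F. a j * \<beta> j ^ t)"
        by (simp add: a'_def sum_distrib_left sum_subtractf[symmetric] algebra_simps)
      also have "\<dots> = - (a x * \<beta> x ^ (Suc t)) - \<beta> x * (- (a x * \<beta> x ^ t))"
        by (simp only: f1 f2)
      also have "\<dots> = 0" by (simp add: algebra_simps)
      finally show "(\<Sum>j\<in>F. a' j * \<beta> j ^ t) = 0" .
    qed
    then have "\<forall>j\<in>F. a' j = 0" using insert.IH[rule_format, of "n - 1" a'] cF H
      by (auto simp: inj_on_insert)
    then have aF: "\<forall>j\<in>F. a j = 0" using H insert by (auto simp: a'_def inj_on_def)
    have "a x * \<beta> x ^ 1 + (\<Sum>j\<in>F. a j * \<beta> j ^ 1) = 0" by (rule sums) (use n1 in auto)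
    then have "a x * \<beta> x = 0" using aF by simp
    then have "a x = 0" using H by simp
    then show "\<forall>j\<in>insert x F. a j = 0" using aF by simp
  qed
qed

lemma roots_dvd:
  fixes a :: "nat \<Rightarrow> 'f::field"
  shows "inj_on a {..<r} \<Longrightarrow> (\<forall>l<r. poly p (a l) = 0) \<Longrightarrow> (\<Prod>l<r. [:- a l, 1:]) dvd p"
proof (induction r arbitrary: p)
  case 0
  then show ?case by simp
next
  case (Suc r)
  have "inj_on a {..<r}" using Suc.prems(1) by (auto simp: inj_on_def)
  then have "(\<Prod>l<r. [:- a l, 1:]) dvd p" using Suc.IH Suc.prems(2) by simp
  then obtain q where q: "p = (\<Prod>l<r. [:- a l, 1:]) * q" by (elim dvdE)
  have "poly (\<Prod>l<r. [:- a l, 1:]) (a r) \<noteq> 0"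
  proof -
    have "\<forall>l<r. a r - a l \<noteq> 0"
    proof (intro allI impI)
      fix l assume "l < r"
      then have "a r \<noteq> a l" using Suc.prems(1) unfolding inj_on_def
        by (metis lessThan_iff less_Suc_eq less_irrefl)
      then show "a r - a l \<noteq> 0" by simp
    qed
    then show ?thesis by (simp add: poly_prod)
  qed
  moreover have "poly p (a r) = 0" using Suc.prems by simp
  ultimately have "poly q (a r) = 0" using q by simp
  then have "[:- a r, 1:] dvd q" by (simp add: poly_eq_0_iff_dvd)
  then have "(\<Prod>l<r. [:- a l, 1:]) * [:- a r, 1:] dvd (\<Prod>l<r. [:- a l, 1:]) * q"
    by (rule mult_dvd_mono[OF dvd_refl])
  then show ?case using q by (simp only: prod.lessThan_Suc)
qed

lemma geom_root_zero:
  fixes \<gamma> :: "'f::field"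
  assumes "\<gamma> ^ n = 1" "\<gamma> \<noteq> 1"
  shows "(\<Sum>j<n. \<gamma> ^ j) = 0"
  using assms by (simp add: geometric_sum)

lemma dual_rs_dist:
  fixes \<alpha> :: "'f::field"
  assumes prim: "primitive_elem n1 \<alpha>" and kn: "k < n1"
    and d: "d \<in> lin_dual n1 (rs_code n1 k \<alpha>)" and dnz: "d j0 \<noteq> 0"
  shows "card {j. j < n1 \<and> d j \<noteq> 0} \<ge> k + 1"
proof (rule ccontr)
  assume "\<not> ?thesis"
  then have cS: "card {j. j < n1 \<and> d j \<noteq> 0} \<le> k" by simp
  have dz: "\<forall>j\<ge>n1. d j = 0" using d by (simp add: lin_dual_def)
  have a1: "\<alpha> ^ n1 = 1" using prim by (simp add: primitive_elem_def)
  have n1pos: "n1 > 0" using kn by simp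
  have anz: "\<alpha> \<noteq> 0" using a1 n1pos by (cases "\<alpha> = 0") (simp_all add: zero_power)
  have ortho: "(\<Sum>j<n1. d j * (\<alpha> ^ j) ^ t) = 0" if t: "t \<in> {1..k}" for t
  proof -
    define c where "c j = (if j < n1 then \<alpha> ^ (t * j) else 0)" for j
    have "c \<in> rs_code n1 k \<alpha>"
      unfolding rs_code_def
    proof (intro CollectI conjI allI impI)
      show "\<And>j. n1 \<le> j \<Longrightarrow> c j = 0" by (simp add: c_def)
      have inj: "inj_on (\<lambda>l. \<alpha> ^ l) {..<n1 - k}"
      proof (rule inj_onI)
        fix x y assume x: "x \<in> {..<n1 - k}" and y: "y \<in> {..<n1 - k}" and e: "\<alpha> ^ x = \<alpha> ^ y"
        show "x = y"
        proof (rule ccontr)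
          assume ne: "x \<noteq> y"
          { fix u v :: nat assume uv: "u < v" "v < n1" "\<alpha> ^ u = \<alpha> ^ v"
            have "\<alpha> ^ u * \<alpha> ^ (v - u) = \<alpha> ^ v" using uv by (metis le_add_diff_inverse less_imp_le power_add)
            then have "\<alpha> ^ u * \<alpha> ^ (v - u) = \<alpha> ^ u * 1" using uv by simp
            then have "\<alpha> ^ (v - u) = 1" using anz by simp
            then have False using prim uv by (simp add: primitive_elem_def) }
          then show False using ne x y e kn by (metis lessThan_iff less_diff_conv linorder_neqE_nat add_lessD1)
        qed
      qed
      have "\<forall>l<n1 - k. poly (\<Sum>j<n1. monom (c j) j) (\<alpha> ^ l) = 0"
      proof (intro allI impI)
        fix l assume l: "l < n1 - k"
        have "poly (\<Sum>j<n1. monom (c j) j) (\<alpha> ^ l) = (\<Sum>j<n1. (\<alpha> ^ (t + l)) ^ j)"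
          unfolding poly_sum poly_monom c_def
          by (intro sum.cong refl) (simp add: power_mult[symmetric] power_add[symmetric] add_mult_distrib)
        also have "\<dots> = 0"
        proof (rule geom_root_zero)
          show "(\<alpha> ^ (t + l)) ^ n1 = 1" using a1 by (simp add: power_mult[symmetric] mult.commute power_mult)
          have "0 < t + l \<and> t + l < n1" using t l by auto
          then show "\<alpha> ^ (t + l) \<noteq> 1" using prim by (simp add: primitive_elem_def)
        qed
        finally show "poly (\<Sum>j<n1. monom (c j) j) (\<alpha> ^ l) = 0" .
      qed
      then show "(\<Prod>l<n1 - k. [:- (\<alpha> ^ l), 1:]) dvd (\<Sum>j<n1. monom (c j) j)"
        using roots_dvd[OF inj] by simp
    qed
    then have "(\<Sum>j<n1. c j * d j) = 0" using d by (simp add: lin_dual_def)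
    moreover have "(\<Sum>j<n1. c j * d j) = (\<Sum>j<n1. d j * (\<alpha> ^ j) ^ t)"
      by (intro sum.cong refl) (simp add: c_def power_mult[symmetric] mult.commute)
    ultimately show ?thesis by simp
  qed
  define S where "S = {j. j < n1 \<and> d j \<noteq> 0}"
  have fS: "finite S" by (simp add: S_def)
  have "\<forall>t\<in>{1..k}. (\<Sum>j\<in>S. d j * (\<alpha> ^ j) ^ t) = 0"
  proof
    fix t assume t: "t \<in> {1..k}"
    have "(\<Sum>j\<in>S. d j * (\<alpha> ^ j) ^ t) = (\<Sum>j<n1. d j * (\<alpha> ^ j) ^ t)"
      by (rule sum.mono_neutral_left) (auto simp: S_def)
    then show "(\<Sum>j\<in>S. d j * (\<alpha> ^ j) ^ t) = 0" using ortho t by simp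
  qed
  moreover have "inj_on (\<lambda>j. \<alpha> ^ j) S"
  proof (rule inj_onI)
    fix x y assume x: "x \<in> S" and y: "y \<in> S" and e: "\<alpha> ^ x = \<alpha> ^ y"
    { fix u v :: nat assume uv: "u < v" "v < n1" "\<alpha> ^ u = \<alpha> ^ v"
      have "\<alpha> ^ u * \<alpha> ^ (v - u) = \<alpha> ^ v" using uv by (metis le_add_diff_inverse less_imp_le power_add)
            then have "\<alpha> ^ u * \<alpha> ^ (v - u) = \<alpha> ^ u * 1" using uv by simp
      then have "\<alpha> ^ (v - u) = 1" using anz by simp
      then have False using prim uv by (simp add: primitive_elem_def) }
    then show "x = y" using x y e unfolding S_def by (metis mem_Collect_eq linorder_neqE_nat)
  qed
  moreover have "\<forall>j\<in>S. \<alpha> ^ j \<noteq> 0" using anz by simp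
  moreover have "card S \<le> k" using cS by (simp add: S_def)
  moreover have "card S \<le> k \<and> inj_on (\<lambda>j. \<alpha> ^ j) S \<and> (\<forall>j\<in>S. \<alpha> ^ j \<noteq> 0)
     \<and> (\<forall>t\<in>{1..k}. (\<Sum>j\<in>S. d j * (\<alpha> ^ j) ^ t) = 0) \<longrightarrow> (\<forall>j\<in>S. d j = 0)"
    using sparse_zero[OF fS, where \<beta>="\<lambda>j. \<alpha> ^ j"] by blast
  ultimately have "\<forall>j\<in>S. d j = 0" by blast
  moreover have "j0 \<in> S" using dnz dz unfolding S_def using not_le by auto
  ultimately show False using dnz by simp
qed

lemma bcoord_zero:
  assumes "self_dual_basis m \<beta>"
  shows "bcoord m \<beta> (0::'f::field) t = False"
proof (cases "t < m")
  case True
  have all: "\<forall>x::'f. \<exists>!cs. length cs = m \<and> x = (\<Sum>t<m. if cs ! t then \<beta> t else 0)"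
    using assms unfolding self_dual_basis_def by (rule conjunct1)
  have ex: "\<exists>!cs. length cs = m \<and> (0::'f) = (\<Sum>t<m. if cs ! t then \<beta> t else 0)"
    by (rule spec[OF all])
  have "(THE cs. length cs = m \<and> (0::'f) = (\<Sum>t<m. if cs ! t then \<beta> t else 0)) = replicate m False"
    by (rule the1_equality[OF ex]) simp
  then show ?thesis using True by (simp add: bcoord_def)
next
  case False
  then show ?thesis by (simp add: bcoord_def)
qed

lemma bcoord_nz:
  assumes "self_dual_basis m \<beta>" and "(x::'f::field) \<noteq> 0"
  shows "\<exists>t<m. bcoord m \<beta> x t"
proof (rule ccontr)
  assume H: "\<not> ?thesis"
  let ?P = "\<lambda>cs. length cs = m \<and> x = (\<Sum>t<m. if cs ! t then \<beta> t else 0)"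
  have all: "\<forall>x::'f. \<exists>!cs. length cs = m \<and> x = (\<Sum>t<m. if cs ! t then \<beta> t else 0)"
    using assms(1) unfolding self_dual_basis_def by (rule conjunct1)
  have ex: "\<exists>!cs. ?P cs" by (rule spec[OF all])
  have P: "?P (THE cs. ?P cs)" by (rule theI'[OF ex])
  have "\<forall>t<m. \<not> (THE cs. ?P cs) ! t" using H by (simp add: bcoord_def)
  then have "x = 0" using P by simp
  then show False using assms by simp
qed

theorem lemma2:
  fixes \<alpha> :: "'f::field" and \<beta> :: "nat \<Rightarrow> 'f"
    and s m n1 n2 :: nat and k :: "nat \<Rightarrow> nat"
    and Cin :: "nat \<Rightarrow> (nat \<Rightarrow> f4) set" and \<delta> :: "nat \<Rightarrow> real"
    and g h :: "nat \<Rightarrow> nat \<Rightarrow> f4"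
  assumes s2: "s \<ge> 2" and m2: "m \<ge> 2" and n1_def: "n1 = 2 ^ m - 1"
    and card_f: "CARD('f) = 2 ^ m"
    and prim: "primitive_elem n1 \<alpha>"
    and sdb: "self_dual_basis m \<beta>"
    and k_range: "\<forall>i\<in>{1..s}. 1 \<le> k i \<and> k i \<le> 2 ^ (m - 1) - 1"
    and n2_ge: "n2 \<ge> s * m"
    and Cin_code: "\<forall>j\<in>{1..s}. additive n2 (Cin j) \<and> self_orth n2 (Cin j)
                              \<and> card (Cin j) = 2 ^ (n2 - j * m)"
    and Cin_nested: "\<forall>j\<in>{1..<s}. Cin (Suc j) \<subseteq> Cin j"
    and Cin_dist: "\<forall>j\<in>{1..s}. \<forall>v \<in> tdual n2 (Cin j) - Cin j. real (wt n2 v) \<ge> \<delta> j * real n2"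
    and gh_in: "\<forall>p<s * m. g p \<in> tdual n2 (Cin s) \<and> h p \<in> tdual n2 (Cin s)"
    and gh_symp: "\<forall>p<s * m. \<forall>p'<s * m. tip n2 (g p) (h p') = (p = p')
                      \<and> \<not> tip n2 (g p) (g p') \<and> \<not> tip n2 (h p) (h p')"
    and gh_span: "\<forall>j\<in>{1..s}. tdual n2 (Cin j) = plus_span (Cin j) (j * m) g h"
    and \<delta>_mono: "\<forall>j\<in>{1..<s}. \<delta> (Suc j) \<le> \<delta> j"
  shows "(\<forall>w \<in> gc_code m \<beta> s n1 n2 (\<lambda>i. lin_dual n1 (rs_code n1 (k i) \<alpha>)) (Cin s) g h
               - gc_code m \<beta> s n1 n2 (\<lambda>i. rs_code n1 (k i) \<alpha>) (Cin s) g h.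
            real (wt2 n1 n2 w) \<ge> Min ((\<lambda>j. \<delta> j * real n2 * real (k j + 1)) ` {1..s}))
       \<and> (\<forall>w \<in> gc_code m \<beta> s n1 n2 (\<lambda>i. lin_dual n1 (rs_code n1 (k i) \<alpha>)) (Cin s) g h
               - gc_code m \<beta> s n1 n2 (\<lambda>i. rs_code n1 (k i) \<alpha>) (Cin s) g h.
            real (wt2 n1 n2 w) / (real n1 * real n2) \<ge> Min ((\<lambda>j. \<delta> j * (real (k j) / real n1)) ` {1..s}))"
proof -
  have m0: "m > 0" using m2 by simp
  have pm: "(2::nat) ^ m = 2 * 2 ^ (m - 1)" using m0 by (cases m) auto
  have p1: "(2::nat) ^ (m - 1) \<ge> 2"
  proof -
    have "(2::nat) ^ 1 \<le> 2 ^ (m - 1)" by (rule power_increasing) (use m2 in auto)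
    then show ?thesis by simp
  qed
  have n1_3: "n1 \<ge> 3" using n1_def pm p1 by linarith
  have k_lt: "k i < n1" if "i \<in> {1..s}" for i
  proof -
    have "k i \<le> 2 ^ (m - 1) - 1" using k_range that by blast
    then show ?thesis using n1_def pm p1 by linarith
  qed
  have n2pos: "n2 > 0"
  proof -
    have "2 * 2 \<le> s * m" using s2 m2 by (rule mult_le_mono)
    then show ?thesis using n2_ge by linarith
  qed
  have sub: "Cin s \<subseteq> Cin J" if J: "J \<in> {1..s}" for J
  proof -
    have "J + d \<le> s \<longrightarrow> Cin (J + d) \<subseteq> Cin J" for d
    proof (induction d)
      case 0
      then show ?case by simp
    next
      case (Suc d)
      show ?case
      proof
        assume "J + Suc d \<le> s"
        then have "J + d \<in> {1..<s}" using J by auto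
        then have "Cin (Suc (J + d)) \<subseteq> Cin (J + d)" using Cin_nested by blast
        then show "Cin (J + Suc d) \<subseteq> Cin J" using Suc \<open>J + Suc d \<le> s\<close> by auto
      qed
    qed
    from this[of "s - J"] show ?thesis using J by auto
  qed
  have gh_dual: "g p \<in> tdual n2 (Cin J) \<and> h p \<in> tdual n2 (Cin J)" if J: "J \<in> {1..s}" and p: "p < J * m" for J p
  proof -
    have z: "(\<lambda>q. 0) \<in> Cin J" using Cin_code J by (simp add: additive_def)
    have eq: "tdual n2 (Cin J) = plus_span (Cin J) (J * m) g h" using gh_span J by blast
    have "g p \<in> plus_span (Cin J) (J * m) g h" unfolding plus_span_def mem_Collect_eq
      apply (rule exI[of _ "\<lambda>q. 0"], rule exI[of _ "\<lambda>p'. p' = p"], rule exI[of _ "\<lambda>_. False"])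
      using z p by simp
    moreover have "h p \<in> plus_span (Cin J) (J * m) g h" unfolding plus_span_def mem_Collect_eq
      apply (rule exI[of _ "\<lambda>q. 0"], rule exI[of _ "\<lambda>_. False"], rule exI[of _ "\<lambda>p'. p' = p"])
      using z p by simp
    ultimately show ?thesis using eq by simp
  qed
  have key: "\<exists>J\<in>{1..s}. \<exists>L. L \<subseteq> {..<n1} \<and> card L \<ge> k J + 1 \<and> (\<forall>l\<in>L. real (wt n2 (w l)) \<ge> \<delta> J * real n2)"
    if w1: "w \<in> gc_code m \<beta> s n1 n2 (\<lambda>i. lin_dual n1 (rs_code n1 (k i) \<alpha>)) (Cin s) g h"
      and w2: "w \<notin> gc_code m \<beta> s n1 n2 (\<lambda>i. rs_code n1 (k i) \<alpha>) (Cin s) g h" for w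
  proof -
    have w1': "(\<forall>l q. n1 \<le> l \<or> n2 \<le> q \<longrightarrow> w l q = 0) \<and>
         (\<exists>b. (\<forall>i\<in>{1..s}. b i \<in> qrs m \<beta> (lin_dual n1 (rs_code n1 (k i) \<alpha>))) \<and>
              (\<forall>l<n1. \<exists>u\<in>Cin s. \<forall>q. w l q = rho_rep g h (s * m) (col m b l) q + u q))"
      using w1 unfolding gc_code_def mem_Collect_eq .
    then have wz: "\<forall>l q. n1 \<le> l \<or> n2 \<le> q \<longrightarrow> w l q = 0" by (rule conjunct1)
    from w1' obtain b where brow: "\<forall>i\<in>{1..s}. b i \<in> qrs m \<beta> (lin_dual n1 (rs_code n1 (k i) \<alpha>))"
      and wl: "\<forall>l<n1. \<exists>u\<in>Cin s. \<forall>q. w l q = rho_rep g h (s * m) (col m b l) q + u q"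
      by (elim conjE exE)
    have "\<exists>i0\<in>{1..s}. b i0 \<notin> qrs m \<beta> (rs_code n1 (k i0) \<alpha>)"
    proof (rule ccontr)
      assume "\<not> ?thesis"
      then have "w \<in> gc_code m \<beta> s n1 n2 (\<lambda>i. rs_code n1 (k i) \<alpha>) (Cin s) g h"
        unfolding gc_code_def mem_Collect_eq using wz wl by (intro conjI exI[of _ b]) auto
      then show False using w2 by blast
    qed
    then obtain i0 where i0: "i0 \<in> {1..s}" "b i0 \<notin> qrs m \<beta> (rs_code n1 (k i0) \<alpha>)" by blast
    define F where "F x y = f4_omega * f2_to_f4 x + f4_omegabar * f2_to_f4 y" for x y
    have "\<forall>i\<in>{1..s}. \<exists>U V. U \<in> lin_dual n1 (rs_code n1 (k i) \<alpha>) \<and> V \<in> lin_dual n1 (rs_code n1 (k i) \<alpha>)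
        \<and> b i = (\<lambda>l t. F (bcoord m \<beta> (U l) t) (bcoord m \<beta> (V l) t))"
      using brow unfolding qrs_def F_def by blast
    then obtain f where f: "\<forall>i\<in>{1..s}. fst (f i) \<in> lin_dual n1 (rs_code n1 (k i) \<alpha>) \<and> snd (f i) \<in> lin_dual n1 (rs_code n1 (k i) \<alpha>)
        \<and> b i = (\<lambda>l t. F (bcoord m \<beta> (fst (f i) l) t) (bcoord m \<beta> (snd (f i) l) t))"
      using bchoice[of "{1..s}" "\<lambda>i UV. fst UV \<in> lin_dual n1 (rs_code n1 (k i) \<alpha>) \<and> snd UV \<in> lin_dual n1 (rs_code n1 (k i) \<alpha>)
        \<and> b i = (\<lambda>l t. F (bcoord m \<beta> (fst UV l) t) (bcoord m \<beta> (snd UV l) t))"] by auto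
    define U where "U i = fst (f i)" for i
    define V where "V i = snd (f i)" for i
    have UV: "\<forall>i\<in>{1..s}. U i \<in> lin_dual n1 (rs_code n1 (k i) \<alpha>) \<and> V i \<in> lin_dual n1 (rs_code n1 (k i) \<alpha>)
        \<and> b i = (\<lambda>l t. F (bcoord m \<beta> (U i l) t) (bcoord m \<beta> (V i l) t))"
      using f by (simp add: U_def V_def)
    have zrs: "(\<lambda>_. 0) \<in> rs_code n1 (k i0) \<alpha>" by (simp add: rs_code_def)
    have Fzero: "F (bcoord m \<beta> 0 t) (bcoord m \<beta> 0 t) = 0" for t
      using bcoord_zero[OF sdb] f4_F_zero unfolding F_def by simp
    have i0nz: "U i0 \<noteq> (\<lambda>_. 0) \<or> V i0 \<noteq> (\<lambda>_. 0)"
    proof (rule ccontr)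
      assume "\<not> ?thesis"
      then have "b i0 = (\<lambda>l t. F (bcoord m \<beta> ((\<lambda>_. 0) l) t) (bcoord m \<beta> ((\<lambda>_. 0) l) t))" using UV i0 by auto
      then have "b i0 \<in> qrs m \<beta> (rs_code n1 (k i0) \<alpha>)" unfolding qrs_def F_def mem_Collect_eq
        apply -
        apply (rule exI[of _ "\<lambda>_. 0"], rule exI[of _ "\<lambda>_. 0"])
        using zrs by simp
      then show False using i0 by blast
    qed
    define I where "I = {i\<in>{1..s}. U i \<noteq> (\<lambda>_. 0) \<or> V i \<noteq> (\<lambda>_. 0)}"
    have fI: "finite I" by (simp add: I_def)
    have i0I: "i0 \<in> I" using i0 i0nz by (simp add: I_def)
    define J where "J = Max I"
    have JI: "J \<in> I" using fI i0I unfolding J_def by (intro Max_in) auto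
    have J: "J \<in> {1..s}" using JI by (simp add: I_def)
    have above: "b i l t = 0" if "i \<in> {1..s}" "J < i" for i l t
    proof -
      have "i \<notin> I" using that fI unfolding J_def using Max_ge leD by blast
      then have "U i = (\<lambda>_. 0)" "V i = (\<lambda>_. 0)" using that by (auto simp: I_def)
      then show ?thesis using UV that Fzero by simp
    qed
    obtain d where dmem: "d \<in> lin_dual n1 (rs_code n1 (k J) \<alpha>)" and dnz: "d \<noteq> (\<lambda>_. 0)"
      and dprop: "\<forall>l t. bcoord m \<beta> (d l) t \<longrightarrow> b J l t \<noteq> 0"
    proof (cases "U J \<noteq> (\<lambda>_. 0)")
      case True
      have "\<forall>l t. bcoord m \<beta> (U J l) t \<longrightarrow> b J l t \<noteq> 0" using UV J f4_F_zero unfolding F_def by simp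
      then show ?thesis using that True UV J by blast
    next
      case False
      then have "V J \<noteq> (\<lambda>_. 0)" using JI by (simp add: I_def)
      moreover have "\<forall>l t. bcoord m \<beta> (V J l) t \<longrightarrow> b J l t \<noteq> 0" using UV J f4_F_zero unfolding F_def by simp
      ultimately show ?thesis using that UV J by blast
    qed
    obtain j0 where j0: "d j0 \<noteq> 0" using dnz by auto
    define L where "L = {l. l < n1 \<and> d l \<noteq> 0}"
    have cardL: "card L \<ge> k J + 1" unfolding L_def
      by (rule dual_rs_dist[OF prim k_lt[OF J] dmem j0])
    have wclaim: "real (wt n2 (w l)) \<ge> \<delta> J * real n2" if l: "l < n1" and t: "t < m" and bnz: "b J l t \<noteq> 0" for l t
    proof -
      obtain u where u: "u \<in> Cin s" "\<forall>q. w l q = rho_rep g h (s * m) (col m b l) q + u q" using wl l by blast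
      define c where "c = col m b l"
      define G where "G p q = (if coef_omega (c p) then g p q else 0) + (if coef_omegabar (c p) then h p q else 0)" for p q
      have wl_eq: "w l = (\<lambda>q. (\<Sum>p<s * m. G p q) + u q)"
        using u by (auto simp: rho_rep_def G_def c_def)
      define p0 where "p0 = (J - 1) * m + t"
      have J1: "J \<ge> 1" "J \<le> s" using J by auto
      have p0_lt: "p0 < J * m"
      proof -
        have "p0 < (J - 1) * m + m" using t by (simp add: p0_def)
        also have "\<dots> = J * m" using J1 by (cases J) auto
        finally show ?thesis .
      qed
      have p0_sm: "p0 < s * m" using p0_lt J1 by (meson le_less_trans mult_le_mono1 not_le)
      have p0div: "p0 div m = J - 1" using t m0 unfolding p0_def by simp
      have p0mod: "p0 mod m = t" using t m0 unfolding p0_def by simp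
      have cp0: "c p0 = b J l t" unfolding c_def col_def p0div p0mod using J1 by simp
      have c_hi: "c p = 0" if "J * m \<le> p" "p < s * m" for p
      proof -
        have "J \<le> p div m" using div_le_mono[OF that(1), of m] m0 by simp
        moreover have "p div m < s" using that by (simp add: less_mult_imp_div_less)
        ultimately show ?thesis unfolding c_def col_def using above by simp
      qed
      have sum_eq: "(\<Sum>p<s * m. G p q) = (\<Sum>p<J * m. G p q)" for q
      proof (rule sum.mono_neutral_right)
        show "finite {..<s * m}" by simp
        show "{..<J * m} \<subseteq> {..<s * m}" using J1 by auto
        show "\<forall>i\<in>{..<s * m} - {..<J * m}. G i q = 0"
          using c_hi by (simp add: G_def f4_coef_zero)
      qed
      have eqJ: "tdual n2 (Cin J) = plus_span (Cin J) (J * m) g h" using gh_span J by blast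
      have uJ: "u \<in> Cin J" using sub[OF J] u by blast
      have in_dual: "w l \<in> tdual n2 (Cin J)"
      proof -
        have "w l = (\<lambda>q. u q + (\<Sum>p<J * m. (if coef_omega (c p) then g p q else 0) + (if coef_omegabar (c p) then h p q else 0)))"
          using wl_eq sum_eq by (auto simp: G_def add.commute)
        then have "w l \<in> plus_span (Cin J) (J * m) g h" unfolding plus_span_def mem_Collect_eq
          apply -
          apply (rule exI[of _ u], rule exI[of _ "\<lambda>p. coef_omega (c p)"], rule exI[of _ "\<lambda>p. coef_omegabar (c p)"])
          using uJ by simp
        then show ?thesis using eqJ by simp
      qed
      have tip_w: "tip n2 (w l) v = tip n2 (\<lambda>q. \<Sum>p<s * m. G p q) v" if v: "v \<in> tdual n2 (Cin s)" for v
      proof -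
        have "\<not> tip n2 u v" using v u unfolding tdual_def by blast
        then show ?thesis unfolding wl_eq tip_add1 by simp
      qed
      have tip_G: "tip n2 (G p) v = ((coef_omega (c p) \<and> tip n2 (g p) v) \<noteq> (coef_omegabar (c p) \<and> tip n2 (h p) v))" for p v
      proof -
        have "G p = (\<lambda>q. (if coef_omega (c p) then g p q else 0) + (if coef_omegabar (c p) then h p q else 0))"
          by (simp add: G_def fun_eq_iff)
        then show ?thesis by (simp only: tip_add1 tip_if1)
      qed
      have cnz: "c p0 \<noteq> 0" using cp0 bnz by simp
      have not_in: "w l \<notin> Cin J"
      proof
        assume wC: "w l \<in> Cin J"
        have gd: "g p0 \<in> tdual n2 (Cin J) \<and> h p0 \<in> tdual n2 (Cin J)" using gh_dual[OF J p0_lt] .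
        have gs: "g p0 \<in> tdual n2 (Cin s) \<and> h p0 \<in> tdual n2 (Cin s)" using gh_in p0_sm by blast
        from f4_nonzero_coef[OF cnz] show False
        proof
          assume co: "coef_omega (c p0)"
          have "{p \<in> {..<s * m}. tip n2 (G p) (h p0)} = {p0}"
            using gh_symp p0_sm co by (auto simp: tip_G)
          then have "tip n2 (w l) (h p0)" using tip_w gs by (simp add: tip_sum1)
          moreover have "\<not> tip n2 (w l) (h p0)" using gd wC unfolding tdual_def by blast
          ultimately show False by blast
        next
          assume co: "coef_omegabar (c p0)"
          have "{p \<in> {..<s * m}. tip n2 (G p) (g p0)} = {p0}"
            using gh_symp p0_sm co by (auto simp: tip_G tip_sym[of n2 "h _" "g p0"])
          then have "tip n2 (w l) (g p0)" using tip_w gs by (simp add: tip_sum1)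
          moreover have "\<not> tip n2 (w l) (g p0)" using gd wC unfolding tdual_def by blast
          ultimately show False by blast
        qed
      qed
      show ?thesis using Cin_dist J in_dual not_in by blast
    qed
    have "\<forall>l\<in>L. real (wt n2 (w l)) \<ge> \<delta> J * real n2"
    proof
      fix l assume lL: "l \<in> L"
      then obtain t where t: "t < m" "bcoord m \<beta> (d l) t" using bcoord_nz[OF sdb] by (auto simp: L_def)
      show "real (wt n2 (w l)) \<ge> \<delta> J * real n2"
        using wclaim[of l t] lL t dprop by (auto simp: L_def)
    qed
    moreover have "L \<subseteq> {..<n1}" by (auto simp: L_def)
    ultimately show ?thesis using J cardL by blast
  qed
  have wt2_eq: "real (wt2 n1 n2 w) = (\<Sum>l<n1. real (wt n2 (w l)))" for w
  proof -
    have "{(l, q). l < n1 \<and> q < n2 \<and> w l q \<noteq> 0} = Sigma {..<n1} (\<lambda>l. {q \<in> {0..<n2}. w l q \<noteq> 0})"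
      by auto
    then have "wt2 n1 n2 w = (\<Sum>l<n1. wt n2 (w l))" unfolding wt2_def wt_def by simp
    then show ?thesis by simp
  qed
  have bnd: "\<exists>J\<in>{1..s}. real (wt2 n1 n2 w) \<ge> \<delta> J * real n2 * real (k J + 1)"
    if w1: "w \<in> gc_code m \<beta> s n1 n2 (\<lambda>i. lin_dual n1 (rs_code n1 (k i) \<alpha>)) (Cin s) g h"
      and w2: "w \<notin> gc_code m \<beta> s n1 n2 (\<lambda>i. rs_code n1 (k i) \<alpha>) (Cin s) g h" for w
  proof -
    obtain J L where J: "J \<in> {1..s}" and L: "L \<subseteq> {..<n1}" "card L \<ge> k J + 1"
      "\<forall>l\<in>L. real (wt n2 (w l)) \<ge> \<delta> J * real n2"
      using key[OF w1 w2] by blast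
    have fL: "finite L" using L(1) finite_subset by blast
    have "(\<Sum>l\<in>L. \<delta> J * real n2) \<le> (\<Sum>l\<in>L. real (wt n2 (w l)))"
      using L(3) by (intro sum_mono) auto
    also have "\<dots> \<le> (\<Sum>l<n1. real (wt n2 (w l)))"
      using L(1) by (intro sum_mono2) auto
    finally have X: "real (card L) * (\<delta> J * real n2) \<le> real (wt2 n1 n2 w)" using wt2_eq by simp
    have "\<delta> J * real n2 * real (k J + 1) \<le> real (wt2 n1 n2 w)"
    proof (cases "\<delta> J \<ge> 0")
      case True
      have "real (k J + 1) * (\<delta> J * real n2) \<le> real (card L) * (\<delta> J * real n2)"
        using L(2) True by (intro mult_right_mono) auto
      then show ?thesis using X by (simp add: mult.commute mult.left_commute)
    next
      case False
      then have "\<delta> J * real n2 * real (k J + 1) \<le> 0"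
        by (simp add: mult_nonpos_nonneg mult_nonpos_nonneg[of "\<delta> J" "real n2"])
      then show ?thesis by simp
    qed
    then show ?thesis using J by blast
  qed
  show ?thesis
  proof (intro conjI ballI)
    fix w assume w: "w \<in> gc_code m \<beta> s n1 n2 (\<lambda>i. lin_dual n1 (rs_code n1 (k i) \<alpha>)) (Cin s) g h
               - gc_code m \<beta> s n1 n2 (\<lambda>i. rs_code n1 (k i) \<alpha>) (Cin s) g h"
    then obtain J where J: "J \<in> {1..s}" and B: "real (wt2 n1 n2 w) \<ge> \<delta> J * real n2 * real (k J + 1)"
      using bnd by blast
    have "Min ((\<lambda>j. \<delta> j * real n2 * real (k j + 1)) ` {1..s}) \<le> \<delta> J * real n2 * real (k J + 1)"
      using J by (intro Min_le) auto
    then show "Min ((\<lambda>j. \<delta> j * real n2 * real (k j + 1)) ` {1..s}) \<le> real (wt2 n1 n2 w)" using B by linarith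
  next
    fix w assume w: "w \<in> gc_code m \<beta> s n1 n2 (\<lambda>i. lin_dual n1 (rs_code n1 (k i) \<alpha>)) (Cin s) g h
               - gc_code m \<beta> s n1 n2 (\<lambda>i. rs_code n1 (k i) \<alpha>) (Cin s) g h"
    then obtain J where J: "J \<in> {1..s}" and B: "real (wt2 n1 n2 w) \<ge> \<delta> J * real n2 * real (k J + 1)"
      using bnd by blast
    have n1p: "real n1 > 0" using n1_3 by simp
    have n2p: "real n2 > 0" using n2pos by simp
    have Y: "\<delta> J * real (k J) * real n2 \<le> real (wt2 n1 n2 w)"
    proof (cases "\<delta> J \<ge> 0")
      case True
      have "\<delta> J * real (k J) * real n2 \<le> \<delta> J * real n2 * real (k J + 1)"
        using True n2p by (simp add: algebra_simps)
      then show ?thesis using B by linarith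
    next
      case False
      then have "\<delta> J * real (k J) * real n2 \<le> 0"
        using n2p by (simp add: mult_nonpos_nonneg)
      then show ?thesis by simp
    qed
    have eq: "\<delta> J * (real (k J) / real n1) = (\<delta> J * real (k J) * real n2) / (real n1 * real n2)"
      using n1p n2p by (simp add: field_simps)
    have "\<delta> J * (real (k J) / real n1) \<le> real (wt2 n1 n2 w) / (real n1 * real n2)"
      unfolding eq using Y n1p n2p by (intro divide_right_mono) auto
    moreover have "Min ((\<lambda>j. \<delta> j * (real (k j) / real n1)) ` {1..s}) \<le> \<delta> J * (real (k J) / real n1)"
      using J by (intro Min_le) auto
    ultimately show "Min ((\<lambda>j. \<delta> j * (real (k j) / real n1)) ` {1..s}) \<le> real (wt2 n1 n2 w) / (real n1 * real n2)"
      by linarith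
  qed
qed

end
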